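(* Let $\theta_1,\theta_2>0$, $\theta=\theta_1+\theta_2$, $p=\theta_1/\theta$, and let $\{\xi(t)\}$ be the two-type star-shaped Fleming–Viot process with mutation, with generator \[ \mathcal{L}g(x)=x\big(g(1)-g(x)\big)+(1-x)\big(g(0)-g(x)\big)+\tfrac12(\theta_1-\theta x)g'(x) \] and $\xi(0)=x$. For $k\ge1$ let $f_k(\xi;x,t)$ be the joint (sub-)density that there are exactly $k$ population replacements in $(0,t)$ and that $\xi(t)=\xi$. Then \[ f_k(\xi;x,t)=\begin{cases}\dfrac{2k\,r_1(\xi;t)}{\theta t(\xi-p)}\Big(1+\dfrac{2}{\theta t}\log\Big(\dfrac{\xi-p}{1-p}\Big)\Big)^{k-1}\dfrac{t^k}{k!}e^{-t}, & \xi>p+(1-p)e^{-\theta t/2},\\[10pt] \dfrac{2k\,r_2(\xi;t)}{\theta t(p-\xi)}\Big(1+\dfrac{2}{\theta t}\log\Big(\dfrac{p-\xi}{p}\Big)\Big)^{k-1}\dfrac{t^k}{k!}e^{-t}, & \xi<p(1-e^{-\theta t/2}),\end{cases} \] where \[ r_1(\xi;t)=p+(x-p)e^{-\theta t/2}\frac{1-p}{\xi-p},\qquad r_2(\xi;t)=1-p-(x-p)e^{-\theta t/2}\frac{p}{p-\xi}. \] Moreover the density $f(\xi;x,t)$ of the continuous part of the distribution of $\xi(t)$ satisfies $f(\xi;x,t)=\sum_{k=1}^\infty f_k(\xi;x,t)$.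
   Context: In the process, at the times of a rate-1 Poisson process the whole population is replaced by the offspring of a single individual chosen at random (type 1 with probability equal to the current type-1 frequency); between replacements, mutation at rate $\theta/2$ per line (new type 1 with probability $p$) drives the type-1 frequency deterministically. $\xi(t)$ is the frequency of type 1. *)

theory Defs
  imports "HOL-Probability.Probability"
begin

text \<open>Deterministic mutation flow between replacements:
  dx/ds = (theta1 - theta x)/2 = (theta/2)(p - x), so x(s) = p + (x0 - p) e^{-theta s/2}.\<close>
definition sfv_flow :: "real \<Rightarrow> real \<Rightarrow> real \<Rightarrow> real \<Rightarrow> real" where
  "sfv_flow \<theta> p z s = p + (z - p) * exp (- \<theta> * s / 2)"

definition sfv_jump :: "(nat \<Rightarrow> 'a \<Rightarrow> real) \<Rightarrow> nat \<Rightarrow> 'a \<Rightarrow> real" where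
  "sfv_jump X n \<omega> = (\<Sum>i<n. X i \<omega>)"

definition sfv_count :: "(nat \<Rightarrow> 'a \<Rightarrow> real) \<Rightarrow> real \<Rightarrow> 'a \<Rightarrow> nat" where
  "sfv_count X t \<omega> = card {n. 1 \<le> n \<and> sfv_jump X n \<omega> \<le> t}"

text \<open>Value of the type-1 frequency right after the n-th replacement (n = 0: initial value x).
  At replacement n+1 the new frequency is 1 iff the uniform variable U n falls below the
  current type-1 frequency (i.e. type 1 is chosen with probability equal to that frequency).\<close>
fun sfv_post :: "real \<Rightarrow> real \<Rightarrow> real \<Rightarrow> (nat \<Rightarrow> 'a \<Rightarrow> real) \<Rightarrow> (nat \<Rightarrow> 'a \<Rightarrow> real)
    \<Rightarrow> nat \<Rightarrow> 'a \<Rightarrow> real" where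
  "sfv_post \<theta> p x X U 0 \<omega> = x"
| "sfv_post \<theta> p x X U (Suc n) \<omega> =
     (if U n \<omega> < sfv_flow \<theta> p (sfv_post \<theta> p x X U n \<omega>) (X n \<omega>) then 1 else 0)"

definition sfv_proc :: "real \<Rightarrow> real \<Rightarrow> real \<Rightarrow> (nat \<Rightarrow> 'a \<Rightarrow> real) \<Rightarrow> (nat \<Rightarrow> 'a \<Rightarrow> real)
    \<Rightarrow> real \<Rightarrow> 'a \<Rightarrow> real" where
  "sfv_proc \<theta> p x X U t \<omega> =
     (let k = sfv_count X t \<omega> in
      sfv_flow \<theta> p (sfv_post \<theta> p x X U k \<omega>) (t - sfv_jump X k \<omega>))"

definition sfv_fk :: "real \<Rightarrow> real \<Rightarrow> real \<Rightarrow> real \<Rightarrow> nat \<Rightarrow> real \<Rightarrow> real" where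
  "sfv_fk \<theta> p x t k \<xi> =
     (let e = exp (- \<theta> * t / 2);
          r1 = p + (x - p) * e * (1 - p) / (\<xi> - p);
          r2 = 1 - p - (x - p) * e * p / (p - \<xi>)
      in if p + (1 - p) * e < \<xi> \<and> \<xi> < 1 then
           2 * real k * r1 / (\<theta> * t * (\<xi> - p))
             * (1 + 2 / (\<theta> * t) * ln ((\<xi> - p) / (1 - p))) ^ (k - 1)
             * t ^ k / fact k * exp (- t)
         else if 0 < \<xi> \<and> \<xi> < p * (1 - e) then
           2 * real k * r2 / (\<theta> * t * (p - \<xi>))
             * (1 + 2 / (\<theta> * t) * ln ((p - \<xi>) / p)) ^ (k - 1)
             * t ^ k / fact k * exp (- t)
         else 0)"

end

theory Submission
  imports Defs
begin


lemma (in prob_space) indep_split_nn: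
  fixes Y :: "'i \<Rightarrow> 'a \<Rightarrow> real" and F :: "real \<times> ('i \<Rightarrow> real) \<Rightarrow> ennreal"
  assumes ind: "indep_vars (\<lambda>_. borel) Y UNIV"
  assumes F[measurable]: "F \<in> borel_measurable (borel \<Otimes>\<^sub>M PiM (UNIV - {i}) (\<lambda>_. borel))"
  shows "(\<integral>\<^sup>+\<omega>. F (Y i \<omega>, restrict (\<lambda>j. Y j \<omega>) (UNIV - {i})) \<partial>M) =
    (\<integral>\<^sup>+v. (\<integral>\<^sup>+\<omega>. F (Y i \<omega>, v) \<partial>M) \<partial>distr M (PiM (UNIV - {i}) (\<lambda>_. borel)) (\<lambda>\<omega>. restrict (\<lambda>j. Y j \<omega>) (UNIV - {i})))"
proof -
  let ?V = "\<lambda>\<omega>. restrict (\<lambda>j. Y j \<omega>) (UNIV - {i})"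
  let ?W = "\<lambda>\<omega>. restrict (\<lambda>j. Y j \<omega>) {i}"
  let ?P = "PiM (UNIV - {i}) (\<lambda>_. borel::real measure)"
  let ?Q = "PiM {i} (\<lambda>_. borel::real measure)"
  have iv: "indep_var ?Q ?W ?P ?V"
    by (rule indep_var_restrict[OF ind]) auto
  then have rv: "random_variable ?Q ?W" "random_variable ?P ?V"
    and eq: "distr M ?Q ?W \<Otimes>\<^sub>M distr M ?P ?V = distr M (?Q \<Otimes>\<^sub>M ?P) (\<lambda>x. (?W x, ?V x))"
    by (simp_all add: indep_var_distribution_eq)
  interpret D1: prob_space "distr M ?Q ?W" using rv(1) by (rule prob_space_distr)
  interpret D2: prob_space "distr M ?P ?V" using rv(2) by (rule prob_space_distr)
  interpret PP: pair_sigma_finite "distr M ?Q ?W" "distr M ?P ?V" ..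
  have Fm[measurable]: "(\<lambda>z. F ((fst z) i, snd z)) \<in> borel_measurable (?Q \<Otimes>\<^sub>M ?P)"
    by measurable
  have "(\<integral>\<^sup>+\<omega>. F (Y i \<omega>, ?V \<omega>) \<partial>M) = (\<integral>\<^sup>+\<omega>. F ((?W \<omega>) i, ?V \<omega>) \<partial>M)" by simp
  also have "\<dots> = (\<integral>\<^sup>+z. F ((fst z) i, snd z) \<partial>distr M (?Q \<Otimes>\<^sub>M ?P) (\<lambda>x. (?W x, ?V x)))"
    using rv by (subst nn_integral_distr) (auto intro!: measurable_Pair)
  also have "\<dots> = (\<integral>\<^sup>+z. F ((fst z) i, snd z) \<partial>(distr M ?Q ?W \<Otimes>\<^sub>M distr M ?P ?V))"
    by (simp add: eq)
  also have "\<dots> = (\<integral>\<^sup>+v. (\<integral>\<^sup>+w. F (w i, v) \<partial>distr M ?Q ?W) \<partial>distr M ?P ?V)"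
    by (subst PP.nn_integral_snd[symmetric]) auto
  also have "\<dots> = (\<integral>\<^sup>+v. (\<integral>\<^sup>+\<omega>. F (Y i \<omega>, v) \<partial>M) \<partial>distr M ?P ?V)"
  proof (rule nn_integral_cong)
    fix v assume "v \<in> space (distr M ?P ?V)"
    then have [measurable]: "v \<in> space ?P" by simp
    show "(\<integral>\<^sup>+w. F (w i, v) \<partial>distr M ?Q ?W) = (\<integral>\<^sup>+\<omega>. F (Y i \<omega>, v) \<partial>M)"
      using rv by (subst nn_integral_distr) auto
  qed
  finally show ?thesis .
qed




lemma sfv_post_measurable[measurable]:
  assumes [measurable]: "\<And>n. X n \<in> borel_measurable N" "\<And>n. U n \<in> borel_measurable N"
  shows "sfv_post \<theta> p x X U k \<in> borel_measurable N"
proof (induction k)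
  case 0 then show ?case by (simp add: sfv_post.simps(1)[abs_def])
next
  case (Suc k)
  note [measurable] = Suc
  show ?case unfolding sfv_post.simps(2)[abs_def] sfv_flow_def by measurable
qed

lemma sfv_jump_measurable[measurable]:
  assumes [measurable]: "\<And>n. X n \<in> borel_measurable N"
  shows "sfv_jump X k \<in> borel_measurable N"
  unfolding sfv_jump_def[abs_def] by measurable

locale sfv = prob_space M for M :: "'a measure" +
  fixes X U :: "nat \<Rightarrow> 'a \<Rightarrow> real" and \<theta> p x t :: real
  assumes ind: "indep_vars (\<lambda>_. borel) (\<lambda>i. case i of Inl n \<Rightarrow> X n | Inr n \<Rightarrow> U n) UNIV"
  and Xd: "\<And>n. distributed M lborel (X n) (exponential_density 1)"
  and Ud: "\<And>n. distributed M lborel (U n) (\<lambda>u. indicator {0..1} u / measure lborel {0..1::real})"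
  and th: "0 < \<theta>" and p0: "0 < p" and p1: "p < 1" and x0: "0 \<le> x" and x1: "x \<le> 1" and tpos: "0 < t"
begin

definition "Y i = (case i of Inl n \<Rightarrow> X n | Inr n \<Rightarrow> U n)"

lemma Xm[measurable]: "X n \<in> borel_measurable M"
  using distributed_measurable[OF Xd[of n]] by simp
lemma Um[measurable]: "U n \<in> borel_measurable M"
  using distributed_measurable[OF Ud[of n]] by simp

lemma X_pos_AE: "AE \<omega> in M. \<forall>n. 0 < X n \<omega>"
proof -
  have "AE \<omega> in M. 0 < X n \<omega>" for n
  proof -
    have "prob {\<omega>\<in>space M. X n \<omega> \<le> 0} = 0"
      using exponential_distributedD_le[OF Xd[of n], of 0] by simp
    then show ?thesis
      by (subst AE_iff_measurable[OF _ refl]) (auto simp: emeasure_eq_measure not_less)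
  qed
  then show ?thesis by (simp add: AE_all_countable)
qed

lemma U_less: assumes "0 \<le> c" "c \<le> 1"
  shows "emeasure M {\<omega>\<in>space M. U n \<omega> < c} = ennreal c"
proof -
  have "emeasure M {\<omega>\<in>space M. U n \<omega> < c} = emeasure M (U n -` {..<c} \<inter> space M)"
    by (intro arg_cong[where f="emeasure M"]) auto
  also have "\<dots> = (\<integral>\<^sup>+u. ennreal (indicator {0..1} u / measure lborel {0..1::real}) * indicator {..<c} u \<partial>lborel)"
    by (rule distributed_emeasure[OF Ud]) simp
  also have "\<dots> = (\<integral>\<^sup>+u. indicator {0..<c} u \<partial>lborel)"
    using assms by (intro nn_integral_cong) (auto split: split_indicator)
  also have "\<dots> = ennreal c" using assms by simp
  finally show ?thesis .
qed

lemma U_ge: assumes "0 \<le> c" "c \<le> 1"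
  shows "emeasure M {\<omega>\<in>space M. \<not> U n \<omega> < c} = ennreal (1 - c)"
proof -
  have "emeasure M {\<omega>\<in>space M. \<not> U n \<omega> < c} = emeasure M (space M - {\<omega>\<in>space M. U n \<omega> < c})"
    by (intro arg_cong[where f="emeasure M"]) auto
  also have "\<dots> = 1 - ennreal c"
    by (subst emeasure_compl) (auto simp: U_less[OF assms] emeasure_space_1)
  also have "\<dots> = ennreal (1 - c)" using assms by (simp add: ennreal_minus ennreal_1[symmetric] del: ennreal_1)
  finally show ?thesis .
qed

end



definition Xi :: "nat + nat \<Rightarrow> nat \<Rightarrow> (nat + nat \<Rightarrow> real) \<Rightarrow> real" where "Xi i n v = (if Inl n = i then 0 else v (Inl n))"
definition Ui :: "nat + nat \<Rightarrow> nat \<Rightarrow> (nat + nat \<Rightarrow> real) \<Rightarrow> real" where "Ui i n v = (if Inr n = i then 0 else v (Inr n))"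

lemma Xi_meas[measurable]: "Xi i n \<in> borel_measurable (PiM (UNIV - {i}) (\<lambda>_. borel))"
  by (cases "Inl n = i") (auto simp: Xi_def[abs_def])
lemma Ui_meas[measurable]: "Ui i n \<in> borel_measurable (PiM (UNIV - {i}) (\<lambda>_. borel))"
  by (cases "Inr n = i") (auto simp: Ui_def[abs_def])

lemma Xseq_meas[measurable]: "(\<lambda>v n. Xi i n v) \<in> measurable (PiM (UNIV - {i}) (\<lambda>_. borel)) (PiM UNIV (\<lambda>_. borel))"
proof -
  have "(\<lambda>v. restrict (\<lambda>n. Xi i n v) UNIV) \<in> measurable (PiM (UNIV - {i}) (\<lambda>_. borel)) (PiM UNIV (\<lambda>_. borel))"
    by (rule measurable_restrict) simp
  then show ?thesis by (simp add: restrict_def)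
qed

lemma sfv_post_cong:
  assumes "\<And>n. X' n v = X n \<omega>" "\<And>j. j < k \<Longrightarrow> U' j v = U j \<omega>"
  shows "sfv_post \<theta> p x X' U' k v = sfv_post \<theta> p x X U k \<omega>"
  using assms by (induction k) auto

lemma sfv_jump_cong:
  assumes "\<And>j. j < k \<Longrightarrow> X' j v = X j \<omega>"
  shows "sfv_jump X' k v = sfv_jump X k \<omega>"
  using assms unfolding sfv_jump_def by simp

context sfv begin

definition "Pk k \<omega> = sfv_post \<theta> p x X U k \<omega>"
definition "S k \<omega> = sfv_jump X k \<omega>"
definition "V i \<omega> = restrict (\<lambda>j. Y j \<omega>) (UNIV - {i})"
abbreviation "PS i \<equiv> PiM (UNIV - {i}) (\<lambda>_. borel::real measure)"

lemma Ym[measurable]: "Y i \<in> borel_measurable M"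
  by (cases i) (auto simp: Y_def)

lemma Vm[measurable]: "V i \<in> measurable M (PS i)"
  unfolding V_def by (rule measurable_restrict) simp

lemma Pkm[measurable]: "Pk k \<in> borel_measurable M"
  unfolding Pk_def[abs_def] by measurable
lemma Sm[measurable]: "S k \<in> borel_measurable M"
  unfolding S_def[abs_def] by measurable

lemma Xi_V: "Xi i n (V i \<omega>) = (if Inl n = i then 0 else X n \<omega>)"
  by (auto simp: Xi_def V_def Y_def)
lemma Ui_V: "Ui i n (V i \<omega>) = (if Inr n = i then 0 else U n \<omega>)"
  by (auto simp: Ui_def V_def Y_def)

lemma split_nn:
  fixes F :: "real \<times> ((nat + nat) \<Rightarrow> real) \<Rightarrow> ennreal"
  assumes F[measurable]: "F \<in> borel_measurable (borel \<Otimes>\<^sub>M PS i)"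
  shows "(\<integral>\<^sup>+\<omega>. F (Y i \<omega>, V i \<omega>) \<partial>M) = (\<integral>\<^sup>+v. (\<integral>\<^sup>+\<omega>. F (Y i \<omega>, v) \<partial>M) \<partial>distr M (PS i) (V i))"
  unfolding V_def
  by (rule indep_split_nn) (use ind in \<open>simp_all add: Y_def[abs_def]\<close>)

lemma Pk_range: "0 \<le> Pk k \<omega> \<and> Pk k \<omega> \<le> 1"
  by (cases k) (auto simp: Pk_def x0 x1)

lemma Pk_01: "k \<noteq> 0 \<Longrightarrow> Pk k \<omega> = 0 \<or> Pk k \<omega> = 1"
  by (cases k) (auto simp: Pk_def)

lemma flow_range: "0 \<le> z \<Longrightarrow> z \<le> 1 \<Longrightarrow> 0 \<le> s \<Longrightarrow> 0 \<le> sfv_flow \<theta> p z s \<and> sfv_flow \<theta> p z s \<le> 1"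
proof -
  assume z: "0 \<le> z" "z \<le> 1" and s: "0 \<le> s"
  define e where "e = exp (- \<theta> * s / 2)"
  have e: "0 < e" "e \<le> 1" using th s by (auto simp: e_def)
  have "sfv_flow \<theta> p z s = p * (1 - e) + z * e" by (simp add: sfv_flow_def e_def algebra_simps)
  moreover have "0 \<le> p * (1 - e) + z * e" using e z p0 by (intro add_nonneg_nonneg mult_nonneg_nonneg) auto
  moreover have "p * (1 - e) + z * e \<le> 1"
  proof -
    have "p * (1 - e) + z * e \<le> 1 * (1 - e) + 1 * e"
      using e z p1 by (intro add_mono mult_right_mono) auto
    then show ?thesis by simp
  qed
  ultimately show ?thesis by simp
qed

end



context sfv begin

definition "Qb b k \<omega> = (if b then Pk k \<omega> else 1 - Pk k \<omega>)"
definition "Hz b z = (if b then p + (x - p) * z else 1 - p - (x - p) * z)"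
definition "Hb b k \<omega> = Hz b (exp (- \<theta> * S k \<omega> / 2))"

lemma Hz_nonneg: "0 \<le> z \<Longrightarrow> z \<le> 1 \<Longrightarrow> 0 \<le> Hz b z"
proof -
  assume z: "0 \<le> z" "z \<le> 1"
  have "Hz b z = (if b then p * (1 - z) + x * z else (1 - p) * (1 - z) + (1 - x) * z)"
    by (simp add: Hz_def algebra_simps)
  also have "0 \<le> \<dots>" using z p0 p1 x0 x1 by (auto intro!: add_nonneg_nonneg mult_nonneg_nonneg)
  finally show ?thesis .
qed

lemma S_nonneg_AE: "AE \<omega> in M. \<forall>k. 0 \<le> S k \<omega>"
  using X_pos_AE by eventually_elim (simp add: S_def sfv_jump_def sum_nonneg less_imp_le)

lemma XseqM[measurable]: "(\<lambda>\<omega> n. X n \<omega>) \<in> measurable M (PiM UNIV (\<lambda>_. borel))"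
proof -
  have "(\<lambda>\<omega>. restrict (\<lambda>n. X n \<omega>) UNIV) \<in> measurable M (PiM UNIV (\<lambda>_. borel))"
    by (rule measurable_restrict) simp
  then show ?thesis by (simp add: restrict_def)
qed

lemma Qb_Suc: "Qb b (Suc k) \<omega> = (if (U k \<omega> < sfv_flow \<theta> p (Pk k \<omega>) (X k \<omega>)) = b then 1 else 0)"
  by (auto simp: Qb_def Pk_def)

lemma lemmaL:
  assumes "Gf \<in> borel_measurable (PiM UNIV (\<lambda>_. borel::real measure))"
  shows "(\<integral>\<^sup>+\<omega>. ennreal (Qb b k \<omega>) * Gf (\<lambda>n. X n \<omega>) \<partial>M) = (\<integral>\<^sup>+\<omega>. ennreal (Hb b k \<omega>) * Gf (\<lambda>n. X n \<omega>) \<partial>M)"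
  using assms
proof (induction k arbitrary: Gf)
  case 0
  then show ?case by (simp add: Qb_def Hb_def Hz_def Pk_def S_def sfv_jump_def)
next
  case (Suc k)
  note Gm[measurable] = Suc.prems
  define i where "i = (Inr k :: nat + nat)"
  define c where "c v = sfv_flow \<theta> p (sfv_post \<theta> p x (Xi i) (Ui i) k v) (Xi i k v)" for v
  define F where "F z = ennreal (if (fst z < c (snd z)) = b then 1 else 0) * Gf (\<lambda>n. Xi i (n::nat) (snd z))" for z
  define pb where "pb = (if b then p else 1 - p)"
  define e where "e \<omega> = exp (- \<theta> * X k \<omega> / 2)" for \<omega>
  have cm[measurable]: "c \<in> borel_measurable (PS i)" unfolding c_def[abs_def] sfv_flow_def by measurable
  have Fm[measurable]: "F \<in> borel_measurable (borel \<Otimes>\<^sub>M PS i)" unfolding F_def[abs_def] by measurable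
  have cV: "c (V i \<omega>) = sfv_flow \<theta> p (Pk k \<omega>) (X k \<omega>)" for \<omega>
  proof -
    have "sfv_post \<theta> p x (Xi i) (Ui i) k (V i \<omega>) = Pk k \<omega>"
      unfolding Pk_def by (rule sfv_post_cong) (auto simp: Xi_V Ui_V i_def)
    then show ?thesis by (simp add: c_def Xi_V i_def)
  qed
  have XV: "(\<lambda>n. Xi i n (V i \<omega>)) = (\<lambda>n. X n \<omega>)" for \<omega> by (simp add: Xi_V i_def)
  have Yi: "Y i \<omega> = U k \<omega>" for \<omega> by (simp add: Y_def i_def)
  have "(\<integral>\<^sup>+\<omega>. ennreal (Qb b (Suc k) \<omega>) * Gf (\<lambda>n. X n \<omega>) \<partial>M) = (\<integral>\<^sup>+\<omega>. F (Y i \<omega>, V i \<omega>) \<partial>M)"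
    by (intro nn_integral_cong) (simp add: F_def Qb_Suc cV XV Yi)
  also have "\<dots> = (\<integral>\<^sup>+v. (\<integral>\<^sup>+\<omega>. F (Y i \<omega>, v) \<partial>M) \<partial>distr M (PS i) (V i))"
    by (rule split_nn) simp
  also have "\<dots> = (\<integral>\<^sup>+v. ennreal (if b then c v else 1 - c v) * Gf (\<lambda>n. Xi i n v) \<partial>distr M (PS i) (V i))"
  proof (rule nn_integral_cong_AE)
    have "AE \<omega> in M. 0 \<le> c (V i \<omega>) \<and> c (V i \<omega>) \<le> 1"
      using X_pos_AE proof eventually_elim
        case (elim \<omega>)
        then have "0 \<le> X k \<omega>" by (simp add: less_imp_le)
        then show ?case using flow_range[of "Pk k \<omega>" "X k \<omega>"] Pk_range[of k \<omega>] by (simp add: cV)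
      qed
    then have AEc: "AE v in distr M (PS i) (V i). 0 \<le> c v \<and> c v \<le> 1"
      by (subst AE_distr_iff) auto
    then show "AE v in distr M (PS i) (V i). (\<integral>\<^sup>+\<omega>. F (Y i \<omega>, v) \<partial>M) = ennreal (if b then c v else 1 - c v) * Gf (\<lambda>n. Xi i n v)"
    proof eventually_elim
      case (elim v)
      have "(\<integral>\<^sup>+\<omega>. F (Y i \<omega>, v) \<partial>M) = (\<integral>\<^sup>+\<omega>. Gf (\<lambda>n. Xi i n v) * indicator {\<omega>\<in>space M. (U k \<omega> < c v) = b} \<omega> \<partial>M)"
        by (intro nn_integral_cong) (auto simp: F_def Yi split: split_indicator)
      also have "\<dots> = Gf (\<lambda>n. Xi i n v) * emeasure M {\<omega>\<in>space M. (U k \<omega> < c v) = b}"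
        by (rule nn_integral_cmult_indicator) measurable
      also have "emeasure M {\<omega>\<in>space M. (U k \<omega> < c v) = b} = ennreal (if b then c v else 1 - c v)"
        using elim by (cases b) (simp_all add: U_less U_ge)
      finally show ?case by (simp add: mult.commute)
    qed
  qed
  also have "\<dots> = (\<integral>\<^sup>+\<omega>. ennreal (if b then c (V i \<omega>) else 1 - c (V i \<omega>)) * Gf (\<lambda>n. Xi i n (V i \<omega>)) \<partial>M)"
    by (subst nn_integral_distr) auto
  also have "\<dots> = (\<integral>\<^sup>+\<omega>. ennreal (pb * (1 - e \<omega>)) * Gf (\<lambda>n. X n \<omega>) + ennreal (Qb b k \<omega>) * (ennreal (e \<omega>) * Gf (\<lambda>n. X n \<omega>)) \<partial>M)"
  proof (rule nn_integral_cong_AE)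
    show "AE \<omega> in M. ennreal (if b then c (V i \<omega>) else 1 - c (V i \<omega>)) * Gf (\<lambda>n. Xi i n (V i \<omega>)) =
      ennreal (pb * (1 - e \<omega>)) * Gf (\<lambda>n. X n \<omega>) + ennreal (Qb b k \<omega>) * (ennreal (e \<omega>) * Gf (\<lambda>n. X n \<omega>))"
      using X_pos_AE
    proof eventually_elim
      case (elim \<omega>)
      have "0 \<le> \<theta> * X k \<omega>" using elim th by (simp add: less_imp_le)
      then have e: "0 < e \<omega>" "e \<omega> \<le> 1" by (auto simp: e_def)
      have q: "0 \<le> Qb b k \<omega>" using Pk_range[of k \<omega>] by (auto simp: Qb_def)
      have pb: "0 \<le> pb * (1 - e \<omega>)" using e p0 p1 by (auto simp: pb_def)
      have eq: "(if b then c (V i \<omega>) else 1 - c (V i \<omega>)) = pb * (1 - e \<omega>) + Qb b k \<omega> * e \<omega>"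
        by (auto simp: cV sfv_flow_def e_def pb_def Qb_def algebra_simps)
      have sp: "ennreal (pb * (1 - e \<omega>) + Qb b k \<omega> * e \<omega>) = ennreal (pb * (1 - e \<omega>)) + ennreal (Qb b k \<omega>) * ennreal (e \<omega>)"
        using pb q e by (simp add: ennreal_plus ennreal_mult)
      show ?case
        by (simp add: XV eq sp distrib_right mult.assoc)
    qed
  qed
  also have "\<dots> = (\<integral>\<^sup>+\<omega>. ennreal (pb * (1 - e \<omega>)) * Gf (\<lambda>n. X n \<omega>) \<partial>M) + (\<integral>\<^sup>+\<omega>. ennreal (Qb b k \<omega>) * (ennreal (e \<omega>) * Gf (\<lambda>n. X n \<omega>)) \<partial>M)"
    unfolding e_def Qb_def by (rule nn_integral_add) auto
  also have "(\<integral>\<^sup>+\<omega>. ennreal (Qb b k \<omega>) * (ennreal (e \<omega>) * Gf (\<lambda>n. X n \<omega>)) \<partial>M) =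
      (\<integral>\<^sup>+\<omega>. ennreal (Hb b k \<omega>) * (ennreal (e \<omega>) * Gf (\<lambda>n. X n \<omega>)) \<partial>M)"
    using Suc.IH[of "\<lambda>xs. ennreal (exp (- \<theta> * xs k / 2)) * Gf xs"] by (simp add: e_def)
  also have "(\<integral>\<^sup>+\<omega>. ennreal (pb * (1 - e \<omega>)) * Gf (\<lambda>n. X n \<omega>) \<partial>M) + \<dots> =
      (\<integral>\<^sup>+\<omega>. ennreal (pb * (1 - e \<omega>)) * Gf (\<lambda>n. X n \<omega>) + ennreal (Hb b k \<omega>) * (ennreal (e \<omega>) * Gf (\<lambda>n. X n \<omega>)) \<partial>M)"
    unfolding e_def Hb_def Hz_def by (rule nn_integral_add[symmetric]) auto
  also have "\<dots> = (\<integral>\<^sup>+\<omega>. ennreal (Hb b (Suc k) \<omega>) * Gf (\<lambda>n. X n \<omega>) \<partial>M)"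
  proof (rule nn_integral_cong_AE)
    show "AE \<omega> in M. ennreal (pb * (1 - e \<omega>)) * Gf (\<lambda>n. X n \<omega>) + ennreal (Hb b k \<omega>) * (ennreal (e \<omega>) * Gf (\<lambda>n. X n \<omega>)) =
      ennreal (Hb b (Suc k) \<omega>) * Gf (\<lambda>n. X n \<omega>)"
      using X_pos_AE S_nonneg_AE
    proof eventually_elim
      case (elim \<omega>)
      have "0 \<le> \<theta> * X k \<omega>" "0 \<le> \<theta> * S k \<omega>" using elim th by (simp_all add: less_imp_le)
      then have e: "0 < e \<omega>" "e \<omega> \<le> 1" by (auto simp: e_def)
      have z: "0 < exp (- \<theta> * S k \<omega> / 2)" "exp (- \<theta> * S k \<omega> / 2) \<le> 1" using elim th by auto
      have q: "0 \<le> Hb b k \<omega>" unfolding Hb_def using z by (intro Hz_nonneg) auto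
      have pb: "0 \<le> pb * (1 - e \<omega>)" using e p0 p1 by (auto simp: pb_def)
      have SS: "S (Suc k) \<omega> = S k \<omega> + X k \<omega>" by (simp add: S_def sfv_jump_def)
      have "- \<theta> * S (Suc k) \<omega> / 2 = - \<theta> * S k \<omega> / 2 + - \<theta> * X k \<omega> / 2"
        by (simp add: SS field_simps)
      then have ex: "exp (- \<theta> * S (Suc k) \<omega> / 2) = exp (- \<theta> * S k \<omega> / 2) * e \<omega>"
        by (simp add: e_def exp_add[symmetric])
      have eq: "Hb b (Suc k) \<omega> = pb * (1 - e \<omega>) + Hb b k \<omega> * e \<omega>"
        unfolding Hb_def Hz_def ex by (auto simp: pb_def algebra_simps)
      have sp: "ennreal (pb * (1 - e \<omega>) + Hb b k \<omega> * e \<omega>) = ennreal (pb * (1 - e \<omega>)) + ennreal (Hb b k \<omega>) * ennreal (e \<omega>)"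
        using pb q e by (simp add: ennreal_plus ennreal_mult)
      show ?case
        by (simp add: eq sp distrib_right mult.assoc)
    qed
  qed
  finally show ?case .
qed

end



context sfv begin

lemma indep_fV:
  assumes [measurable]: "f \<in> borel_measurable (PS i)"
  shows "indep_var borel (\<lambda>\<omega>. f (V i \<omega>)) borel (Y i)"
proof -
  have "indep_var (PS i) (\<lambda>\<omega>. restrict (\<lambda>j. Y j \<omega>) (UNIV - {i})) (PiM {i} (\<lambda>_. borel)) (\<lambda>\<omega>. restrict (\<lambda>j. Y j \<omega>) {i})"
    by (rule indep_var_restrict) (use ind in \<open>auto simp: Y_def[abs_def]\<close>)
  then have "indep_var borel (f \<circ> (\<lambda>\<omega>. restrict (\<lambda>j. Y j \<omega>) (UNIV - {i}))) borel ((\<lambda>w. w i) \<circ> (\<lambda>\<omega>. restrict (\<lambda>j. Y j \<omega>) {i}))"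
    by (rule indep_var_compose) auto
  then show ?thesis by (simp add: comp_def V_def)
qed

lemma S_V: "sfv_jump (Xi (Inl k)) k (V (Inl k) \<omega>) = S k \<omega>"
  unfolding S_def by (rule sfv_jump_cong) (auto simp: Xi_V)

lemma S_erlang: "distributed M lborel (S (Suc k)) (erlang_density k 1)"
proof (induction k)
  case 0
  have "S (Suc 0) = X 0" by (simp add: S_def sfv_jump_def fun_eq_iff)
  then show ?case using Xd[of 0] by simp
next
  case (Suc k)
  have iv: "indep_var borel (\<lambda>\<omega>. sfv_jump (Xi (Inl (Suc k))) (Suc k) (V (Inl (Suc k)) \<omega>)) borel (Y (Inl (Suc k)))"
    by (intro indep_fV sfv_jump_measurable Xi_meas)
  then have iv: "indep_var borel (S (Suc k)) borel (X (Suc k))"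
    by (simp add: S_V Y_def)
  have "distributed M lborel (\<lambda>\<omega>. S (Suc k) \<omega> + X (Suc k) \<omega>) (erlang_density (Suc k + Suc 0 - 1) 1)"
    by (rule sum_indep_erlang[OF iv _ Suc.IH Xd]) simp
  moreover have "(\<lambda>\<omega>. S (Suc k) \<omega> + X (Suc k) \<omega>) = S (Suc (Suc k))"
    by (simp add: S_def sfv_jump_def fun_eq_iff)
  ultimately show ?case by simp
qed

lemma X_gt: "0 \<le> a \<Longrightarrow> emeasure M {\<omega>\<in>space M. a < X n \<omega>} = ennreal (exp (- a))"
  using exponential_distributedD_gt[OF Xd[of n], of a] by (simp add: emeasure_eq_measure)

lemma split_X:
  assumes hm[measurable]: "h \<in> borel_measurable borel"
  shows "(\<integral>\<^sup>+\<omega>. h (S (Suc k) \<omega>) * indicator {\<omega>. S (Suc k) \<omega> \<le> t \<and> t < S (Suc k) \<omega> + X (Suc k) \<omega>} \<omega> \<partial>M)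
    = (\<integral>\<^sup>+s. ennreal (erlang_density k 1 s) * (h s * indicator {..t} s * ennreal (exp (- (t - s)))) \<partial>lborel)"
proof -
  define i where "i = (Inl (Suc k) :: nat + nat)"
  define F where "F (z::real \<times> (nat+nat \<Rightarrow> real)) = h (sfv_jump (Xi i) (Suc k) (snd z)) * indicator {z. sfv_jump (Xi i) (Suc k) (snd z) \<le> t \<and> t < sfv_jump (Xi i) (Suc k) (snd z) + fst z} z" for z
  have Fm[measurable]: "F \<in> borel_measurable (borel \<Otimes>\<^sub>M PS i)" unfolding F_def[abs_def] by measurable
  have SV: "sfv_jump (Xi i) (Suc k) (V i \<omega>) = S (Suc k) \<omega>" for \<omega> unfolding i_def by (rule S_V)
  have Yi: "Y i \<omega> = X (Suc k) \<omega>" for \<omega> by (simp add: Y_def i_def)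
  have "(\<integral>\<^sup>+\<omega>. h (S (Suc k) \<omega>) * indicator {\<omega>. S (Suc k) \<omega> \<le> t \<and> t < S (Suc k) \<omega> + X (Suc k) \<omega>} \<omega> \<partial>M)
      = (\<integral>\<^sup>+\<omega>. F (Y i \<omega>, V i \<omega>) \<partial>M)"
    by (intro nn_integral_cong) (simp add: F_def SV Yi split: split_indicator)
  also have "\<dots> = (\<integral>\<^sup>+v. (\<integral>\<^sup>+\<omega>. F (Y i \<omega>, v) \<partial>M) \<partial>distr M (PS i) (V i))"
    by (rule split_nn) simp
  also have "\<dots> = (\<integral>\<^sup>+v. h (sfv_jump (Xi i) (Suc k) v) * indicator {..t} (sfv_jump (Xi i) (Suc k) v)
        * ennreal (exp (- (t - sfv_jump (Xi i) (Suc k) v))) \<partial>distr M (PS i) (V i))"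
  proof (rule nn_integral_cong)
    fix v :: "nat + nat \<Rightarrow> real"
    define s where "s = sfv_jump (Xi i) (Suc k) v"
    have "(\<integral>\<^sup>+\<omega>. F (Y i \<omega>, v) \<partial>M) = (\<integral>\<^sup>+\<omega>. (h s * indicator {..t} s) * indicator {\<omega>\<in>space M. t - s < X (Suc k) \<omega>} \<omega> \<partial>M)"
      by (intro nn_integral_cong) (auto simp: F_def Yi s_def split: split_indicator)
    also have "\<dots> = (h s * indicator {..t} s) * emeasure M {\<omega>\<in>space M. t - s < X (Suc k) \<omega>}"
      by (rule nn_integral_cmult_indicator) measurable
    also have "\<dots> = h s * indicator {..t} s * ennreal (exp (- (t - s)))"
      by (cases "s \<le> t") (simp_all add: X_gt)
    finally show "(\<integral>\<^sup>+\<omega>. F (Y i \<omega>, v) \<partial>M) = h (sfv_jump (Xi i) (Suc k) v) * indicator {..t} (sfv_jump (Xi i) (Suc k) v)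
        * ennreal (exp (- (t - sfv_jump (Xi i) (Suc k) v)))" by (simp add: s_def)
  qed
  also have "\<dots> = (\<integral>\<^sup>+\<omega>. h (S (Suc k) \<omega>) * indicator {..t} (S (Suc k) \<omega>) * ennreal (exp (- (t - S (Suc k) \<omega>))) \<partial>M)"
    by (subst nn_integral_distr) (auto simp: SV)
  also have "\<dots> = (\<integral>\<^sup>+s. ennreal (erlang_density k 1 s) * (h s * indicator {..t} s * ennreal (exp (- (t - s)))) \<partial>lborel)"
    by (rule distributed_nn_integral[OF S_erlang, symmetric]) measurable
  finally show ?thesis .
qed

end



context sfv begin

definition "ee = exp (- \<theta> * t / 2)"
definition "jb b = (if b then 1 else 0::real)"
definition "cc b = jb b - p"
definition "RR b = (if b then {p + (1-p) * ee <..< 1} else {0 <..< p * (1 - ee)})"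
definition "FF b m \<xi> = 2 * real (Suc m) * Hz b (ee / ((\<xi> - p) / cc b)) / (\<theta> * t * \<bar>\<xi> - p\<bar>)
   * (1 + 2 / (\<theta> * t) * ln ((\<xi> - p) / cc b)) ^ m * t ^ Suc m / fact (Suc m) * exp (- t)"

lemma ee: "0 < ee" "ee < 1" using th tpos by (auto simp: ee_def)

lemma cc_ne: "cc b \<noteq> 0" using p0 p1 by (auto simp: cc_def jb_def)

lemma RR_iff: "p + cc b * w \<in> RR b \<longleftrightarrow> ee < w \<and> w < 1"
proof (cases b)
  case True
  have "p + (1 - p) * w < 1 \<longleftrightarrow> (1 - p) * w < (1 - p) * 1" by (simp add: algebra_simps)
  also have "\<dots> \<longleftrightarrow> w < 1" by (intro mult_less_cancel_left_pos) (use p1 in simp)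
  finally show ?thesis using True p0 p1 by (auto simp: RR_def cc_def jb_def mult_less_cancel_left_pos)
next
  case False
  have "p + (0 - p) * w = p * (1 - w)" by (simp add: algebra_simps)
  moreover have "p * (1 - w) < p * (1 - ee) \<longleftrightarrow> ee < w" using p0 by (auto simp: mult_less_cancel_left_pos)
  moreover have "0 < p * (1 - w) \<longleftrightarrow> w < 1" using p0 by (simp add: zero_less_mult_iff)
  ultimately show ?thesis using False by (auto simp: RR_def cc_def jb_def)
qed

lemma FF_meas[measurable]: "FF b m \<in> borel_measurable borel"
  unfolding FF_def[abs_def] Hz_def by measurable

lemma RR_sets[measurable]: "RR b \<in> sets borel"
  by (simp add: RR_def)

lemma dens_side:
  assumes A[measurable]: "A \<in> sets borel"
  shows "(\<integral>\<^sup>+\<xi>. ennreal (indicator (RR b) \<xi> * FF b m \<xi>) * indicator A \<xi> \<partial>lborel) =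
    (\<integral>\<^sup>+s. ennreal (Hz b (exp (- \<theta> * s / 2)) * s ^ m / fact m * exp (- t) * indicator A (sfv_flow \<theta> p (jb b) (t - s))) * indicator {0..t} s \<partial>lborel)"
proof -
  define c where "c = cc b"
  have c: "c \<noteq> 0" using cc_ne by (simp add: c_def)
  define g where "g s = exp (- \<theta> * (t - s) / 2)" for s
  define g' where "g' s = \<theta> / 2 * exp (- \<theta> * (t - s) / 2)" for s
  define \<phi> where "\<phi> w = \<bar>c\<bar> * FF b m (p + c * w) * indicator A (p + c * w)" for w
  have \<phi>m[measurable]: "\<phi> \<in> borel_measurable borel" unfolding \<phi>_def[abs_def] by measurable
  have "(\<integral>\<^sup>+\<xi>. ennreal (indicator (RR b) \<xi> * FF b m \<xi>) * indicator A \<xi> \<partial>lborel)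
     = \<bar>c\<bar> * (\<integral>\<^sup>+w. ennreal (indicator (RR b) (p + c * w) * FF b m (p + c * w)) * indicator A (p + c * w) \<partial>lborel)"
    by (rule nn_integral_real_affine[OF _ c]) measurable
  also have "\<dots> = (\<integral>\<^sup>+w. ennreal \<bar>c\<bar> * (ennreal (indicator (RR b) (p + c * w) * FF b m (p + c * w)) * indicator A (p + c * w)) \<partial>lborel)"
    by (subst nn_integral_cmult) auto
  also have "\<dots> = (\<integral>\<^sup>+w. ennreal (\<phi> w * indicator {g 0 .. g t} w) \<partial>lborel)"
  proof (rule nn_integral_cong_AE)
    have geq: "g 0 = ee" "g t = 1" by (simp_all add: g_def ee_def)
    show "AE w in lborel. ennreal \<bar>c\<bar> * (ennreal (indicator (RR b) (p + c * w) * FF b m (p + c * w)) * indicator A (p + c * w)) =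
       ennreal (\<phi> w * indicator {g 0 .. g t} w)"
      using AE_lborel_singleton[of ee] AE_lborel_singleton[of 1]
    proof eventually_elim
      case (elim w)
      have R: "p + c * w \<in> RR b \<longleftrightarrow> ee < w \<and> w < 1" using RR_iff by (simp add: c_def)
      show ?case
        using elim R geq by (auto simp: \<phi>_def indicator_def ennreal_mult' ennreal_mult'' mult.assoc)
    qed
  qed
  also have "\<dots> = (\<integral>\<^sup>+s. ennreal (\<phi> (g s) * g' s * indicator {0..t} s) \<partial>lborel)"
  proof (rule nn_integral_substitution)
    show "set_borel_measurable borel {g 0..g t} \<phi>" unfolding set_borel_measurable_def by measurable
    show "(g has_real_derivative g' x) (at x)" for x
      unfolding g_def g'_def by (auto intro!: derivative_eq_intros simp: field_simps)
    show "continuous_on {0..t} g'" unfolding g'_def by (intro continuous_intros) auto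
    show "0 \<le> g' x" for x using th by (simp add: g'_def)
    show "0 \<le> t" using tpos by simp
  qed
  also have "\<dots> = (\<integral>\<^sup>+s. ennreal (Hz b (exp (- \<theta> * s / 2)) * s ^ m / fact m * exp (- t) * indicator A (sfv_flow \<theta> p (jb b) (t - s))) * indicator {0..t} s \<partial>lborel)"
  proof (rule nn_integral_cong)
    fix s :: real
    show "ennreal (\<phi> (g s) * g' s * indicator {0..t} s) =
      ennreal (Hz b (exp (- \<theta> * s / 2)) * s ^ m / fact m * exp (- t) * indicator A (sfv_flow \<theta> p (jb b) (t - s))) * indicator {0..t} s"
    proof (cases "s \<in> {0..t}")
      case False then show ?thesis by simp
    next
      case True
      have gpos: "0 < g s" by (simp add: g_def)
      have pc: "p + c * g s - p = c * g s" by simp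
      have l0: "(p + c * g s - p) / c = g s" using c by simp
      have l: "ln ((p + c * g s - p) / c) = - \<theta> * (t - s) / 2"
        unfolding l0 by (simp add: g_def)
      have base: "1 + 2 / (\<theta> * t) * ln ((p + c * g s - p) / c) = s / t"
        unfolding l using th tpos by (simp add: field_simps)
      have eg: "ee / ((p + c * g s - p) / c) = exp (- \<theta> * s / 2)"
        using c by (simp add: pc ee_def g_def exp_diff[symmetric] field_simps exp_minus[symmetric] exp_add[symmetric])
      have fl: "sfv_flow \<theta> p (jb b) (t - s) = p + c * g s"
        by (simp add: sfv_flow_def c_def cc_def g_def)
      have abs: "\<bar>p + c * g s - p\<bar> = \<bar>c\<bar> * g s" using gpos by (simp add: abs_mult)
      have "\<phi> (g s) * g' s = \<bar>c\<bar> * (2 * real (Suc m) * Hz b (exp (- \<theta> * s / 2)) / (\<theta> * t * (\<bar>c\<bar> * g s))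
        * (s / t) ^ m * t ^ Suc m / fact (Suc m) * exp (- t)) * indicator A (p + c * g s) * (\<theta> / 2 * g s)"
        unfolding \<phi>_def FF_def c_def[symmetric] base eg abs by (simp add: g'_def g_def)
      also have "\<dots> = Hz b (exp (- \<theta> * s / 2)) * s ^ m / fact m * exp (- t) * indicator A (p + c * g s)"
      proof -
        have st: "(s / t) ^ m * t ^ Suc m = s ^ m * t" using tpos by (simp add: power_divide)
        have fs: "fact (Suc m) = real (Suc m) * (fact m :: real)" by simp
        have nz: "fact m \<noteq> (0::real)" "\<bar>c\<bar> \<noteq> 0" "real (Suc m) \<noteq> 0" "g s \<noteq> 0" "\<theta> \<noteq> 0" "t \<noteq> 0"
          using c gpos th tpos by auto
        have "\<bar>c\<bar> * (2 * real (Suc m) * Hz b (exp (- \<theta> * s / 2)) / (\<theta> * t * (\<bar>c\<bar> * g s))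
          * (s / t) ^ m * t ^ Suc m / fact (Suc m) * exp (- t)) * indicator A (p + c * g s) * (\<theta> / 2 * g s)
          = (\<bar>c\<bar> * (2 * real (Suc m) * Hz b (exp (- \<theta> * s / 2)) / (\<theta> * t * (\<bar>c\<bar> * g s))
          * ((s / t) ^ m * t ^ Suc m) / fact (Suc m) * exp (- t)) * indicator A (p + c * g s) * (\<theta> / 2 * g s))"
          by (simp add: mult.assoc)
        also have "\<dots> = Hz b (exp (- \<theta> * s / 2)) * s ^ m / fact m * exp (- t) * indicator A (p + c * g s)"
          unfolding st fs using nz by (simp add: field_simps del: of_nat_Suc)
        finally show ?thesis .
      qed
      finally show ?thesis using True by (simp add: fl)
    qed
  qed
  finally show ?thesis .
qed

end



context sfv begin

abbreviation "N \<equiv> sfv_count X t"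
abbreviation "proc \<equiv> sfv_proc \<theta> p x X U t"

lemma count_eq: "sfv_count X t \<omega> = card {n. 1 \<le> n \<and> S n \<omega> \<le> t}"
  by (simp add: sfv_count_def S_def)

lemma N_Suc_iff: "N \<omega> = Suc a \<longleftrightarrow> (\<exists>F\<in>{F. finite F \<and> card F = Suc a}. \<forall>n. (1 \<le> n \<and> S n \<omega> \<le> t) = (n \<in> F))"
proof
  assume "N \<omega> = Suc a"
  then have "card {n. 1 \<le> n \<and> S n \<omega> \<le> t} = Suc a" by (simp add: count_eq)
  moreover then have "finite {n. 1 \<le> n \<and> S n \<omega> \<le> t}" by (intro card_ge_0_finite) simp
  ultimately show "\<exists>F\<in>{F. finite F \<and> card F = Suc a}. \<forall>n. (1 \<le> n \<and> S n \<omega> \<le> t) = (n \<in> F)"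
    by (intro bexI[of _ "{n. 1 \<le> n \<and> S n \<omega> \<le> t}"]) auto
next
  assume "\<exists>F\<in>{F. finite F \<and> card F = Suc a}. \<forall>n. (1 \<le> n \<and> S n \<omega> \<le> t) = (n \<in> F)"
  then obtain F where F: "finite F" "card F = Suc a" "\<And>n. (1 \<le> n \<and> S n \<omega> \<le> t) = (n \<in> F)" by auto
  then have "{n. 1 \<le> n \<and> S n \<omega> \<le> t} = F" by auto
  then show "N \<omega> = Suc a" using F by (simp add: count_eq)
qed

lemma N_Suc_sets: "{\<omega>\<in>space M. N \<omega> = Suc a} \<in> sets M"
proof -
  have "{\<omega>\<in>space M. N \<omega> = Suc a} = (\<Union>F\<in>{F. finite F \<and> card F = Suc a}. {\<omega>\<in>space M. \<forall>n. (1 \<le> n \<and> S n \<omega> \<le> t) = (n \<in> F)})"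
    by (auto simp: N_Suc_iff)
  also have "\<dots> \<in> sets M"
  proof (rule sets.countable_UN')
    show "countable {F::nat set. finite F \<and> card F = Suc a}"
      by (rule countable_subset[OF _ countable_Collect_finite]) auto
    show "(\<lambda>F. {\<omega>\<in>space M. \<forall>n. (1 \<le> n \<and> S n \<omega> \<le> t) = (n \<in> F)}) ` {F. finite F \<and> card F = Suc a} \<subseteq> sets M"
      by auto
  qed
  finally show ?thesis .
qed

lemma N_meas[measurable]: "N \<in> measurable M (count_space UNIV)"
proof (subst measurable_count_space_eq2_countable, safe)
  fix a :: nat
  show "N -` {a} \<inter> space M \<in> sets M"
  proof (cases a)
    case (Suc b)
    then show ?thesis using N_Suc_sets[of b] by (simp add: vimage_def Int_def conj_commute)
  next
    case 0
    have "N -` {a} \<inter> space M = space M - (\<Union>b. {\<omega>\<in>space M. N \<omega> = Suc b})"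
      using 0 by auto (metis not0_implies_Suc)
    also have "\<dots> \<in> sets M" using N_Suc_sets by auto
    finally show ?thesis .
  qed
qed simp

lemma proc_meas[measurable]: "proc \<in> borel_measurable M"
proof -
  have "(\<lambda>\<omega>. (\<lambda>k \<omega>. sfv_flow \<theta> p (sfv_post \<theta> p x X U k \<omega>) (t - sfv_jump X k \<omega>)) (N \<omega>) \<omega>) \<in> borel_measurable M"
    by (rule measurable_compose_countable[OF _ N_meas]) (unfold sfv_flow_def, measurable)
  then show ?thesis by (simp add: sfv_proc_def[abs_def] Let_def)
qed

lemma S_Suc: "S (Suc k) \<omega> = S k \<omega> + X k \<omega>" by (simp add: S_def sfv_jump_def)
lemma S_0: "S 0 \<omega> = 0" by (simp add: S_def sfv_jump_def)

lemma S_mono: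
  assumes pos: "\<forall>n. 0 < X n \<omega>" and "a \<le> b" shows "S a \<omega> \<le> S b \<omega>"
  by (rule lift_Suc_mono_le[of "\<lambda>k. S k \<omega>", OF _ assms(2)]) (use pos in \<open>simp add: S_Suc less_imp_le\<close>)

lemma N_interval:
  assumes pos: "\<forall>n. 0 < X n \<omega>" and k: "S k \<omega> \<le> t" "t < S (Suc k) \<omega>"
  shows "N \<omega> = k"
proof -
  have "{n. 1 \<le> n \<and> S n \<omega> \<le> t} = {1..k}"
  proof (intro set_eqI iffI)
    fix n assume "n \<in> {n. 1 \<le> n \<and> S n \<omega> \<le> t}"
    then have "1 \<le> n" "S n \<omega> \<le> t" by auto
    moreover have "n \<le> k"
    proof (rule ccontr)
      assume "\<not> n \<le> k"
      then have "S (Suc k) \<omega> \<le> S n \<omega>" by (intro S_mono[OF pos]) simp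
      then show False using k \<open>S n \<omega> \<le> t\<close> by simp
    qed
    ultimately show "n \<in> {1..k}" by simp
  next
    fix n assume "n \<in> {1..k}"
    then show "n \<in> {n. 1 \<le> n \<and> S n \<omega> \<le> t}" using S_mono[OF pos, of n k] k by auto
  qed
  then show ?thesis by (simp add: count_eq)
qed

lemma N_inf:
  assumes "\<forall>n. S n \<omega> \<le> t" shows "N \<omega> = 0"
proof -
  have "{n. 1 \<le> n \<and> S n \<omega> \<le> t} = {1..}" using assms by auto
  then show ?thesis using infinite_Ici[of "1::nat"] by (simp add: count_eq)
qed

lemma S_cases:
  assumes "\<not> (\<forall>n. S n \<omega> \<le> t)"
  obtains k where "S k \<omega> \<le> t" "t < S (Suc k) \<omega>"
proof -
  define n where "n = (LEAST n. t < S n \<omega>)"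
  have ex: "\<exists>n. t < S n \<omega>" using assms by (auto simp: not_le)
  then have tn: "t < S n \<omega>" unfolding n_def by (rule LeastI_ex)
  have "n \<noteq> 0"
  proof
    assume "n = 0" then show False using tn tpos by (simp add: S_0)
  qed
  then obtain k where nk: "n = Suc k" by (cases n) auto
  have "\<not> t < S k \<omega>" using not_less_Least[of k "\<lambda>n. t < S n \<omega>"] nk n_def by simp
  then show ?thesis using that[of k] tn nk by simp
qed

lemma N_Suc_char:
  assumes pos: "\<forall>n. 0 < X n \<omega>"
  shows "N \<omega> = Suc m \<longleftrightarrow> S (Suc m) \<omega> \<le> t \<and> t < S (Suc m) \<omega> + X (Suc m) \<omega>"
proof (cases "\<forall>n. S n \<omega> \<le> t")
  case True
  have "S (Suc (Suc m)) \<omega> \<le> t" using True by simp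
  then show ?thesis using N_inf[OF True] by (auto simp: S_Suc)
next
  case False
  then obtain k where k: "S k \<omega> \<le> t" "t < S (Suc k) \<omega>" by (rule S_cases)
  have Nk: "N \<omega> = k" by (rule N_interval[OF pos k])
  show ?thesis
  proof
    assume "N \<omega> = Suc m" then show "S (Suc m) \<omega> \<le> t \<and> t < S (Suc m) \<omega> + X (Suc m) \<omega>"
      using k Nk by (simp add: S_Suc[symmetric])
  next
    assume "S (Suc m) \<omega> \<le> t \<and> t < S (Suc m) \<omega> + X (Suc m) \<omega>"
    then have "N \<omega> = Suc m" by (intro N_interval[OF pos]) (auto simp: S_Suc)
    then show "N \<omega> = Suc m" .
  qed
qed

lemma N_0_char:
  assumes pos: "\<forall>n. 0 < X n \<omega>" and fin: "\<not> (\<forall>n. S n \<omega> \<le> t)"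
  shows "N \<omega> = 0 \<longleftrightarrow> t < X 0 \<omega>"
proof -
  obtain k where k: "S k \<omega> \<le> t" "t < S (Suc k) \<omega>" using fin by (rule S_cases)
  have Nk: "N \<omega> = k" by (rule N_interval[OF pos k])
  show ?thesis
  proof
    assume "N \<omega> = 0" then show "t < X 0 \<omega>" using k Nk by (simp add: S_Suc S_0)
  next
    assume "t < X 0 \<omega>" then have "N \<omega> = 0" using tpos by (intro N_interval[OF pos]) (auto simp: S_Suc S_0)
    then show "N \<omega> = 0" .
  qed
qed

lemma proc_eq: "proc \<omega> = sfv_flow \<theta> p (Pk (N \<omega>) \<omega>) (t - S (N \<omega>) \<omega>)"
  by (simp add: sfv_proc_def Pk_def S_def Let_def)

end



context sfv begin

lemma fk_eq: "sfv_fk \<theta> p x t (Suc m) \<xi> = (if \<xi> \<in> RR True then FF True m \<xi> else if \<xi> \<in> RR False then FF False m \<xi> else 0)"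
proof -
  have e: "exp (- \<theta> * t / 2) = ee" by (simp add: ee_def)
  show ?thesis
  proof (cases "\<xi> \<in> RR True")
    case True
    then have c: "p + (1 - p) * ee < \<xi> \<and> \<xi> < 1" by (simp add: RR_def)
    then have "p < \<xi>" using ee p1 by (smt (verit) mult_pos_pos)
    then have nz: "\<xi> - p \<noteq> 0" "1 - p \<noteq> 0" using p1 by auto
    have r: "p + (x - p) * ee * (1 - p) / (\<xi> - p) = Hz True (ee / ((\<xi> - p) / cc True))"
      using nz by (simp add: Hz_def cc_def jb_def field_simps)
    show ?thesis using True c \<open>p < \<xi>\<close>
      unfolding sfv_fk_def Let_def e FF_def by (simp add: r cc_def jb_def)
  next
    case False
    note F1 = this
    show ?thesis
    proof (cases "\<xi> \<in> RR False")
      case True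
      then have c: "0 < \<xi> \<and> \<xi> < p * (1 - ee)" by (simp add: RR_def)
      moreover have "p * (1 - ee) < p" using ee p0 by simp
      ultimately have "\<xi> < p" by linarith
      then have nz: "\<xi> - p \<noteq> 0" "p \<noteq> 0" "p - \<xi> \<noteq> 0" using p0 by auto
      have r: "1 - p - (x - p) * ee * p / (p - \<xi>) = Hz False (ee / ((\<xi> - p) / cc False))"
        using nz by (simp add: Hz_def cc_def jb_def field_simps)
      have l: "(p - \<xi>) / p = (\<xi> - p) / cc False" using nz by (simp add: cc_def jb_def field_simps)
      have ab: "\<bar>\<xi> - p\<bar> = p - \<xi>" using \<open>\<xi> < p\<close> by simp
      have n1: "\<not> (p + (1 - p) * ee < \<xi> \<and> \<xi> < 1)" using F1 by (simp add: RR_def)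
      show ?thesis
        unfolding sfv_fk_def Let_def e
        apply (subst if_not_P[OF n1])
        apply (subst if_P[OF c])
        using True F1 by (simp add: FF_def r l ab)
    next
      case False
      then have n: "\<not> (0 < \<xi> \<and> \<xi> < p * (1 - ee))" "\<not> (p + (1 - p) * ee < \<xi> \<and> \<xi> < 1)"
        using F1 by (simp_all add: RR_def)
      show ?thesis unfolding sfv_fk_def Let_def e
        apply (subst if_not_P[OF n(2)])
        apply (subst if_not_P[OF n(1)])
        using False F1 by simp
    qed
  qed
qed

lemma RR_disj: "\<xi> \<in> RR True \<Longrightarrow> \<xi> \<notin> RR False"
proof -
  assume "\<xi> \<in> RR True"
  then have "p < \<xi>" using ee p1 by (simp add: RR_def) (smt (verit) mult_pos_pos)
  moreover have "p * (1 - ee) < p" using ee p0 by simp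
  ultimately show "\<xi> \<notin> RR False" by (simp add: RR_def)
qed

lemma fk_decomp: "ennreal (sfv_fk \<theta> p x t (Suc m) \<xi>) * indicator A \<xi> =
   ennreal (indicator (RR True) \<xi> * FF True m \<xi>) * indicator A \<xi> + ennreal (indicator (RR False) \<xi> * FF False m \<xi>) * indicator A \<xi>"
  using RR_disj[of \<xi>] by (auto simp: fk_eq indicator_def)

definition "Gfb A m b xs = indicator {xs. (\<Sum>i<Suc m. xs i) \<le> t \<and> t < (\<Sum>i<Suc m. xs i) + xs (Suc m)} xs
    * indicator A (sfv_flow \<theta> p (jb b) (t - (\<Sum>i<Suc m. xs i)))"

lemma sum_comp_meas[measurable]: "(\<lambda>xs::nat \<Rightarrow> real. sum xs {..<k}) \<in> borel_measurable (PiM UNIV (\<lambda>_. borel))"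
  by (rule borel_measurable_sum[where f="\<lambda>i xs. xs i", simplified]) simp

lemma Gfb_meas[measurable]: assumes [measurable]: "A \<in> sets borel" shows "(Gfb A m b :: (nat \<Rightarrow> real) \<Rightarrow> ennreal) \<in> borel_measurable (PiM UNIV (\<lambda>_. borel))"
  unfolding Gfb_def[abs_def] sfv_flow_def by measurable

lemma S_sum: "S k \<omega> = (\<Sum>i<k. X i \<omega>)" by (simp add: S_def sfv_jump_def)

lemma prob_b:
  assumes A[measurable]: "A \<in> sets borel"
  shows "(\<integral>\<^sup>+\<omega>. ennreal (Qb b (Suc m) \<omega>) * Gfb A m b (\<lambda>n. X n \<omega>) \<partial>M) =
    (\<integral>\<^sup>+s. ennreal (Hz b (exp (- \<theta> * s / 2)) * s ^ m / fact m * exp (- t) * indicator A (sfv_flow \<theta> p (jb b) (t - s))) * indicator {0..t} s \<partial>lborel)"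
proof -
  define h where "h s = ennreal (Hz b (exp (- \<theta> * s / 2))) * indicator A (sfv_flow \<theta> p (jb b) (t - s))" for s
  have hm[measurable]: "h \<in> borel_measurable borel" unfolding h_def[abs_def] Hz_def sfv_flow_def by measurable
  have "(\<integral>\<^sup>+\<omega>. ennreal (Qb b (Suc m) \<omega>) * Gfb A m b (\<lambda>n. X n \<omega>) \<partial>M) =
     (\<integral>\<^sup>+\<omega>. ennreal (Hb b (Suc m) \<omega>) * Gfb A m b (\<lambda>n. X n \<omega>) \<partial>M)"
    by (rule lemmaL) simp
  also have "\<dots> = (\<integral>\<^sup>+\<omega>. h (S (Suc m) \<omega>) * indicator {\<omega>. S (Suc m) \<omega> \<le> t \<and> t < S (Suc m) \<omega> + X (Suc m) \<omega>} \<omega> \<partial>M)"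
    unfolding Gfb_def Hb_def h_def S_sum by (intro nn_integral_cong) (simp add: indicator_def)
  also have "\<dots> = (\<integral>\<^sup>+s. ennreal (erlang_density m 1 s) * (h s * indicator {..t} s * ennreal (exp (- (t - s)))) \<partial>lborel)"
    by (rule split_X) simp
  also have "\<dots> = (\<integral>\<^sup>+s. ennreal (Hz b (exp (- \<theta> * s / 2)) * s ^ m / fact m * exp (- t) * indicator A (sfv_flow \<theta> p (jb b) (t - s))) * indicator {0..t} s \<partial>lborel)"
  proof (rule nn_integral_cong)
    fix s :: real
    show "ennreal (erlang_density m 1 s) * (h s * indicator {..t} s * ennreal (exp (- (t - s)))) =
      ennreal (Hz b (exp (- \<theta> * s / 2)) * s ^ m / fact m * exp (- t) * indicator A (sfv_flow \<theta> p (jb b) (t - s))) * indicator {0..t} s"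
    proof (cases "0 \<le> s \<and> s \<le> t")
      case False then show ?thesis by (auto simp: erlang_density_def indicator_def not_le)
    next
      case True
      have z: "0 \<le> exp (- \<theta> * s / 2)" "exp (- \<theta> * s / 2) \<le> 1" using True th by auto
      have H: "0 \<le> Hz b (exp (- \<theta> * s / 2))" by (rule Hz_nonneg[OF z])
      have er: "erlang_density m 1 s = s ^ m * exp (- s) / fact m" using True by (simp add: erlang_density_def)
      have sm: "0 \<le> s ^ m / fact m" using True by simp
      have ex: "exp (- s) * exp (- (t - s)) = exp (- t)" by (simp add: exp_add[symmetric])
      have ge: "0 \<le> erlang_density m 1 s" by simp
      have sp: "ennreal (erlang_density m 1 s * Hz b (exp (- \<theta> * s / 2)) * exp (- (t - s))) =
          ennreal (erlang_density m 1 s) * ennreal (Hz b (exp (- \<theta> * s / 2))) * ennreal (exp (- (t - s)))"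
        using ge H by (simp add: ennreal_mult)
      have "ennreal (erlang_density m 1 s) * (h s * indicator {..t} s * ennreal (exp (- (t - s))))
        = ennreal (erlang_density m 1 s * Hz b (exp (- \<theta> * s / 2)) * exp (- (t - s))) * indicator A (sfv_flow \<theta> p (jb b) (t - s))"
        unfolding sp using True by (simp add: h_def mult_ac)
      also have "erlang_density m 1 s * Hz b (exp (- \<theta> * s / 2)) * exp (- (t - s)) = Hz b (exp (- \<theta> * s / 2)) * s ^ m / fact m * exp (- t)"
        by (simp add: er ex[symmetric])
      finally show ?thesis using True by (auto simp: indicator_def)
    qed
  qed
  finally show ?thesis .
qed

end



context sfv begin

lemma part1_enn:
  assumes A[measurable]: "A \<in> sets borel"
  shows "emeasure M {\<omega>\<in>space M. N \<omega> = Suc m \<and> proc \<omega> \<in> A} = (\<integral>\<^sup>+\<xi>. ennreal (sfv_fk \<theta> p x t (Suc m) \<xi>) * indicator A \<xi> \<partial>lborel)"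
proof -
  have E[measurable]: "{\<omega>\<in>space M. N \<omega> = Suc m \<and> proc \<omega> \<in> A} \<in> sets M" by measurable
  have "emeasure M {\<omega>\<in>space M. N \<omega> = Suc m \<and> proc \<omega> \<in> A} = (\<integral>\<^sup>+\<omega>. indicator {\<omega>\<in>space M. N \<omega> = Suc m \<and> proc \<omega> \<in> A} \<omega> \<partial>M)"
    by simp
  also have "\<dots> = (\<integral>\<^sup>+\<omega>. ennreal (Qb True (Suc m) \<omega>) * Gfb A m True (\<lambda>n. X n \<omega>) + ennreal (Qb False (Suc m) \<omega>) * Gfb A m False (\<lambda>n. X n \<omega>) \<partial>M)"
  proof (rule nn_integral_cong_AE)
    show "AE \<omega> in M. indicator {\<omega>\<in>space M. N \<omega> = Suc m \<and> proc \<omega> \<in> A} \<omega> = ennreal (Qb True (Suc m) \<omega>) * Gfb A m True (\<lambda>n. X n \<omega>) + ennreal (Qb False (Suc m) \<omega>) * Gfb A m False (\<lambda>n. X n \<omega>)"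
      using X_pos_AE AE_space
    proof eventually_elim
      case (elim \<omega>)
      have Nc: "N \<omega> = Suc m \<longleftrightarrow> S (Suc m) \<omega> \<le> t \<and> t < S (Suc m) \<omega> + X (Suc m) \<omega>"
        by (rule N_Suc_char) (use elim in simp)
      have G: "Gfb A m b (\<lambda>n. X n \<omega>) = indicator {\<omega>. S (Suc m) \<omega> \<le> t \<and> t < S (Suc m) \<omega> + X (Suc m) \<omega>} \<omega> * indicator A (sfv_flow \<theta> p (jb b) (t - S (Suc m) \<omega>))" for b
        unfolding Gfb_def S_sum by (simp add: indicator_def)
      have pr: "N \<omega> = Suc m \<Longrightarrow> proc \<omega> = sfv_flow \<theta> p (Pk (Suc m) \<omega>) (t - S (Suc m) \<omega>)"
        by (simp add: proc_eq)
      show ?case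
        using Pk_01[of "Suc m" \<omega>] elim(2) Nc pr
        by (auto simp: G Qb_def jb_def indicator_def)
    qed
  qed
  also have "\<dots> = (\<integral>\<^sup>+\<omega>. ennreal (Qb True (Suc m) \<omega>) * Gfb A m True (\<lambda>n. X n \<omega>) \<partial>M) + (\<integral>\<^sup>+\<omega>. ennreal (Qb False (Suc m) \<omega>) * Gfb A m False (\<lambda>n. X n \<omega>) \<partial>M)"
    unfolding Qb_def by (rule nn_integral_add) auto
  also have "\<dots> = (\<integral>\<^sup>+\<xi>. ennreal (indicator (RR True) \<xi> * FF True m \<xi>) * indicator A \<xi> \<partial>lborel) + (\<integral>\<^sup>+\<xi>. ennreal (indicator (RR False) \<xi> * FF False m \<xi>) * indicator A \<xi> \<partial>lborel)"
    by (simp add: prob_b dens_side)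
  also have "\<dots> = (\<integral>\<^sup>+\<xi>. ennreal (indicator (RR True) \<xi> * FF True m \<xi>) * indicator A \<xi> + ennreal (indicator (RR False) \<xi> * FF False m \<xi>) * indicator A \<xi> \<partial>lborel)"
    by (rule nn_integral_add[symmetric]) auto
  also have "\<dots> = (\<integral>\<^sup>+\<xi>. ennreal (sfv_fk \<theta> p x t (Suc m) \<xi>) * indicator A \<xi> \<partial>lborel)"
    by (simp add: fk_decomp)
  finally show ?thesis .
qed

end



context sfv begin

lemma fk_meas[measurable]: "sfv_fk \<theta> p x t k \<in> borel_measurable borel"
  unfolding sfv_fk_def[abs_def] Let_def by measurable

lemma FF_nonneg: assumes "\<xi> \<in> RR b" shows "0 \<le> FF b m \<xi>"
proof -
  define w where "w = (\<xi> - p) / cc b"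
  have xi: "\<xi> = p + cc b * w" using cc_ne by (simp add: w_def)
  have w: "ee < w" "w < 1" using assms RR_iff[of b w] xi by auto
  have w0: "0 < w" using w ee by simp
  have z: "0 \<le> ee / w" "ee / w \<le> 1" using w w0 ee by (auto simp: field_simps)
  have "ln ee < ln w" using w ee by simp
  then have "- \<theta> * t / 2 < ln w" by (simp add: ee_def)
  then have "0 < 1 + 2 / (\<theta> * t) * ln w" using th tpos by (simp add: field_simps)
  then show ?thesis unfolding FF_def w_def[symmetric]
    using Hz_nonneg[OF z, of b] th tpos by (intro mult_nonneg_nonneg divide_nonneg_nonneg) auto
qed

lemma fk_nonneg: "0 \<le> sfv_fk \<theta> p x t (Suc m) \<xi>"
  by (auto simp: fk_eq intro!: FF_nonneg)

lemma FF_aux: "2 * real (Suc k) * H / D * B ^ k * t ^ Suc k / fact (Suc k) * E =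
   (2 * H / D * t * E) * (inverse (fact k) * (B * t) ^ k)"
proof -
  have q: "real (Suc k) \<noteq> 0" by (simp del: of_nat_Suc)
  have "fact (Suc k) = real (Suc k) * (fact k :: real)" by (simp del: of_nat_Suc)
  then show ?thesis using q
    by (simp add: divide_inverse power_mult_distrib mult_ac del: of_nat_Suc)
qed

lemma FF_series: "FF b k \<xi> = (2 * Hz b (ee / ((\<xi> - p) / cc b)) / (\<theta> * t * \<bar>\<xi> - p\<bar>) * t * exp (- t))
   * (inverse (fact k) * ((1 + 2 / (\<theta> * t) * ln ((\<xi> - p) / cc b)) * t) ^ k)"
  unfolding FF_def by (rule FF_aux)

lemma fk_summable: "summable (\<lambda>k. sfv_fk \<theta> p x t (Suc k) \<xi>)"
proof (cases "\<xi> \<in> RR True")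
  case True then show ?thesis by (simp add: fk_eq FF_series summable_mult summable_exp)
next
  case False then show ?thesis by (cases "\<xi> \<in> RR False") (simp_all add: fk_eq FF_series summable_mult summable_exp)
qed

lemma part1:
  assumes A[measurable]: "A \<in> sets borel"
  shows "measure M {\<omega>\<in>space M. N \<omega> = Suc m \<and> proc \<omega> \<in> A} = (\<integral>\<xi>\<in>A. sfv_fk \<theta> p x t (Suc m) \<xi> \<partial>lborel)"
proof -
  have "measure M {\<omega>\<in>space M. N \<omega> = Suc m \<and> proc \<omega> \<in> A} = enn2real (\<integral>\<^sup>+\<xi>. ennreal (sfv_fk \<theta> p x t (Suc m) \<xi>) * indicator A \<xi> \<partial>lborel)"
    by (simp add: measure_def part1_enn)
  also have "\<dots> = (\<integral>\<xi>. indicator A \<xi> *\<^sub>R sfv_fk \<theta> p x t (Suc m) \<xi> \<partial>lborel)"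
    by (rule enn2real_nn_integral_eq_integral) (auto simp: fk_nonneg indicator_def)
  finally show ?thesis by (simp add: set_lebesgue_integral_def)
qed

end



context sfv begin

lemma inf_null: "emeasure M {\<omega>\<in>space M. \<forall>n. S n \<omega> \<le> t} = 0"
proof -
  let ?Z = "{\<omega>\<in>space M. \<forall>n. S n \<omega> \<le> t}"
  have Zm: "?Z \<in> sets M" by measurable
  define q where "q n = measure M {\<omega>\<in>space M. S (Suc n) \<omega> \<le> t}" for n
  have le: "measure M ?Z \<le> q n" for n
    unfolding q_def by (rule finite_measure_mono) auto
  have q: "q n = 1 - exp (- t) * (\<Sum>j\<le>n. t ^ j / fact j)" for n
    using erlang_distributed_le[OF S_erlang[of n], of t] tpos
    by (simp add: q_def erlang_CDF_def sum_distrib_left field_simps)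
  have L: "(\<lambda>n. \<Sum>j<n. t ^ j / fact j) \<longlonglongrightarrow> exp t"
    using exp_converges[of t] by (simp add: sums_def divide_inverse mult.commute)
  then have "(\<lambda>n. \<Sum>j<Suc n. t ^ j / fact j) \<longlonglongrightarrow> exp t" by (rule LIMSEQ_Suc)
  then have "(\<lambda>n. \<Sum>j\<le>n. t ^ j / fact j) \<longlonglongrightarrow> exp t" by (simp add: lessThan_Suc_atMost)
  then have "(\<lambda>n. 1 - exp (- t) * (\<Sum>j\<le>n. t ^ j / fact j)) \<longlonglongrightarrow> 1 - exp (- t) * exp t"
    by (intro tendsto_intros)
  then have "q \<longlonglongrightarrow> 0" by (simp add: q[abs_def] exp_minus)
  then have "measure M ?Z \<le> 0" by (rule LIMSEQ_le_const) (use le in auto)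
  then have "measure M ?Z = 0" by (simp add: antisym)
  then show ?thesis by (simp add: emeasure_eq_measure)
qed

lemma fin_AE: "AE \<omega> in M. \<not> (\<forall>n. S n \<omega> \<le> t)"
  by (subst AE_iff_measurable[OF _ refl]) (auto simp: inf_null)

lemma part0_enn:
  assumes A[measurable]: "A \<in> sets borel"
  shows "emeasure M {\<omega>\<in>space M. N \<omega> = 0 \<and> proc \<omega> \<in> A} = ennreal (exp (- t) * indicator A (sfv_flow \<theta> p x t))"
proof -
  have "emeasure M {\<omega>\<in>space M. N \<omega> = 0 \<and> proc \<omega> \<in> A} = emeasure M {\<omega>\<in>space M. t < X 0 \<omega> \<and> sfv_flow \<theta> p x t \<in> A}"
  proof (rule emeasure_eq_AE)
    show "AE \<omega> in M. (\<omega> \<in> {\<omega>\<in>space M. N \<omega> = 0 \<and> proc \<omega> \<in> A}) = (\<omega> \<in> {\<omega>\<in>space M. t < X 0 \<omega> \<and> sfv_flow \<theta> p x t \<in> A})"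
      using X_pos_AE fin_AE
    proof eventually_elim
      case (elim \<omega>)
      have N0: "N \<omega> = 0 \<longleftrightarrow> t < X 0 \<omega>" by (rule N_0_char) (use elim in auto)
      have "N \<omega> = 0 \<Longrightarrow> proc \<omega> = sfv_flow \<theta> p x t" by (simp add: proc_eq Pk_def S_0)
      then show ?case using N0 by auto
    qed
  qed measurable
  also have "\<dots> = ennreal (exp (- t) * indicator A (sfv_flow \<theta> p x t))"
    using X_gt[of t 0] tpos by (cases "sfv_flow \<theta> p x t \<in> A") auto
  finally show ?thesis .
qed

lemma part2:
  assumes A[measurable]: "A \<in> sets borel"
  shows "measure M {\<omega>\<in>space M. proc \<omega> \<in> A} = exp (- t) * indicator A (sfv_flow \<theta> p x t)
     + (\<integral>\<xi>\<in>A. (\<Sum>k. sfv_fk \<theta> p x t (Suc k) \<xi>) \<partial>lborel)"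
proof -
  define F where "F n = {\<omega>\<in>space M. N \<omega> = n \<and> proc \<omega> \<in> A}" for n
  define I where "I = (\<integral>\<^sup>+\<xi>. ennreal (\<Sum>k. sfv_fk \<theta> p x t (Suc k) \<xi>) * indicator A \<xi> \<partial>lborel)"
  have Fm: "F n \<in> sets M" for n unfolding F_def by measurable
  have "emeasure M {\<omega>\<in>space M. proc \<omega> \<in> A} = emeasure M (\<Union>n. F n)"
    by (intro arg_cong[where f="emeasure M"]) (auto simp: F_def)
  also have "\<dots> = (\<Sum>n. emeasure M (F n))"
    by (rule suminf_emeasure[symmetric]) (auto simp: Fm disjoint_family_on_def F_def)
  also have "\<dots> = (\<Sum>j. emeasure M (F (j + 1))) + (\<Sum>j<1. emeasure M (F j))"
    by (rule suminf_offset) (rule summableI)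
  also have "(\<Sum>j<1. emeasure M (F j)) = ennreal (exp (- t) * indicator A (sfv_flow \<theta> p x t))"
    by (simp add: F_def part0_enn)
  also have "(\<Sum>j. emeasure M (F (j + 1))) = (\<Sum>j. (\<integral>\<^sup>+\<xi>. ennreal (sfv_fk \<theta> p x t (Suc j) \<xi>) * indicator A \<xi> \<partial>lborel))"
    by (simp add: F_def part1_enn)
  also have "\<dots> = (\<integral>\<^sup>+\<xi>. (\<Sum>j. ennreal (sfv_fk \<theta> p x t (Suc j) \<xi>) * indicator A \<xi>) \<partial>lborel)"
    by (rule nn_integral_suminf[symmetric]) simp
  also have "\<dots> = I"
    unfolding I_def by (intro nn_integral_cong) (simp add: suminf_ennreal2 fk_nonneg fk_summable)
  finally have tot: "emeasure M {\<omega>\<in>space M. proc \<omega> \<in> A} = I + ennreal (exp (- t) * indicator A (sfv_flow \<theta> p x t))" .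
  have "I \<noteq> \<infinity>"
  proof
    assume "I = \<infinity>"
    then have "emeasure M {\<omega>\<in>space M. proc \<omega> \<in> A} = \<infinity>" using tot by simp
    then show False by (simp add: emeasure_eq_measure)
  qed
  have Ie: "enn2real I = (\<integral>\<xi>. indicator A \<xi> *\<^sub>R (\<Sum>k. sfv_fk \<theta> p x t (Suc k) \<xi>) \<partial>lborel)"
    unfolding I_def
    by (rule enn2real_nn_integral_eq_integral) (auto simp: fk_nonneg indicator_def intro!: suminf_nonneg fk_summable)
  have "measure M {\<omega>\<in>space M. proc \<omega> \<in> A} = enn2real I + exp (- t) * indicator A (sfv_flow \<theta> p x t)"
  proof -
    have "enn2real (I + ennreal (exp (- t) * indicator A (sfv_flow \<theta> p x t))) = enn2real I + enn2real (ennreal (exp (- t) * indicator A (sfv_flow \<theta> p x t)))"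
      by (rule enn2real_plus) (use \<open>I \<noteq> \<infinity>\<close> in \<open>auto simp: less_top\<close>)
    then show ?thesis by (simp add: measure_def tot)
  qed
  then show ?thesis by (simp add: Ie set_lebesgue_integral_def)
qed

end

theorem theorem6:
  fixes M :: "'a measure"
    and X U :: "nat \<Rightarrow> 'a \<Rightarrow> real"
    and \<theta>\<^sub>1 \<theta>\<^sub>2 \<theta> p x t :: real
  assumes "prob_space M"
    and "prob_space.indep_vars M (\<lambda>_. borel)
           (\<lambda>i. case i of Inl n \<Rightarrow> X n | Inr n \<Rightarrow> U n) (UNIV :: (nat + nat) set)"
    and "\<And>n. distributed M lborel (X n) (exponential_density 1)"
    and "\<And>n. distributed M lborel (U n) (\<lambda>u. indicator {0..1} u / measure lborel {0..1::real})"
    and "0 < \<theta>\<^sub>1" and "0 < \<theta>\<^sub>2"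
    and "\<theta> = \<theta>\<^sub>1 + \<theta>\<^sub>2" and "p = \<theta>\<^sub>1 / \<theta>"
    and "0 \<le> x" and "x \<le> 1" and "0 < t"
  shows "(\<forall>k\<ge>1. \<forall>A\<in>sets borel.
            measure M {\<omega>\<in>space M. sfv_count X t \<omega> = k \<and> sfv_proc \<theta> p x X U t \<omega> \<in> A}
              = (\<integral>\<xi>\<in>A. sfv_fk \<theta> p x t k \<xi> \<partial>lborel))
       \<and> (\<forall>A\<in>sets borel.
            measure M {\<omega>\<in>space M. sfv_proc \<theta> p x X U t \<omega> \<in> A}
              = exp (- t) * indicator A (sfv_flow \<theta> p x t)
                + (\<integral>\<xi>\<in>A. (\<Sum>k. sfv_fk \<theta> p x t (Suc k) \<xi>) \<partial>lborel))"
proof -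
  have th: "0 < \<theta>" using assms by simp
  have p0: "0 < p" using assms by simp
  have "\<theta>\<^sub>1 < \<theta>" using assms by simp
  then have p1: "p < 1" using th \<open>p = \<theta>\<^sub>1 / \<theta>\<close> by (simp add: divide_less_eq)
  interpret sfv M X U \<theta> p x t
    by (rule sfv.intro[OF assms(1)], unfold_locales) (use assms th p0 p1 in auto)
  show ?thesis
  proof (intro conjI allI impI ballI)
    fix k :: nat and A :: "real set"
    assume k: "1 \<le> k" and A: "A \<in> sets borel"
    then obtain m where "k = Suc m" by (cases k) auto
    then show "measure M {\<omega>\<in>space M. sfv_count X t \<omega> = k \<and> sfv_proc \<theta> p x X U t \<omega> \<in> A}
              = (\<integral>\<xi>\<in>A. sfv_fk \<theta> p x t k \<xi> \<partial>lborel)"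
      using part1[OF A, of m] by simp
  next
    fix A :: "real set" assume A: "A \<in> sets borel"
    show "measure M {\<omega>\<in>space M. sfv_proc \<theta> p x X U t \<omega> \<in> A}
              = exp (- t) * indicator A (sfv_flow \<theta> p x t)
                + (\<integral>\<xi>\<in>A. (\<Sum>k. sfv_fk \<theta> p x t (Suc k) \<xi>) \<partial>lborel)"
      by (rule part2[OF A])
  qed
qed

end
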